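(* For all positive integers $d$ and $p$, (i) $\displaystyle \left|B(d,p)\cap\mathbb{P}^d_\circ\right|=\frac{1}{2}\sum_{j=1}^{d}2^j\binom{d}{j}\sum_{i=j}^{p}c_\psi(i,j)$, and (ii) $\displaystyle \kappa\!\left(B(d,p)\cap\mathbb{P}^d_\circ\right)=\frac{1}{2d}\sum_{j=1}^{d}2^j\binom{d}{j}\sum_{i=j}^{p}i\,c_\psi(i,j)$, where for positive integers $p,d$, $$c_\psi(p,d)=\frac{1}{(d-1)!}\sum_{i=1}^{d}s(d,i)\,J_{i-1}(p).$$
   Context: A point of $\mathbb{Z}^d$ is primitive if its coordinates are relatively prime; $\mathbb{P}^d$ is the set of primitive points of $\mathbb{Z}^d$, and $\mathbb{P}^d_\circ$ is the set of points of $\mathbb{P}^d$ whose first non-zero coordinate is positive. $B(d,p)=\{x\in\mathbb{R}^d:\|x\|_1\le p\}$. For a finite set $\mathcal{X}\subset\mathbb{R}^d$, $\kappa(\mathcal{X})=\max_{1\le i\le d}\sum_{x\in\mathcal{X}}|x_i|$. $J_q$ is Jordan's totient function: $J_q(p)=p^q\prod_{n}(1-n^{-q})$, the product over the primes $n$ dividing $p$ (so $J_0(1)=1$ and $J_0(p)=0$ for $p>1$). $s(d,i)$ are the (signed) Stirling numbers of the first kind, given by $s(d+1,i)=-d\,s(d,i)+s(d,i-1)$, $s(i,i)=1$, and $s(d,0)=0$ for $d>0$. *)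

theory Defs
  imports "HOL-Analysis.Analysis" "HOL-Combinatorics.Stirling" "HOL-Computational_Algebra.Primes"
begin

text \<open>Points of Z^d are represented as integer lists of length d.\<close>

definition primitive :: "int list \<Rightarrow> bool" where
  "primitive x \<longleftrightarrow> Gcd (set x) = 1"

definition first_nonzero_pos :: "int list \<Rightarrow> bool" where
  "first_nonzero_pos x \<longleftrightarrow> (\<exists>k<length x. (\<forall>i<k. x ! i = 0) \<and> x ! k > 0)"

definition BP :: "nat \<Rightarrow> nat \<Rightarrow> int list set" where
  "BP d p = {x. length x = d \<and> (\<Sum>i<d. \<bar>x ! i\<bar>) \<le> int p \<and> primitive x \<and> first_nonzero_pos x}"

definition kappa :: "nat \<Rightarrow> int list set \<Rightarrow> int" where
  "kappa d X = Max ((\<lambda>i. \<Sum>x\<in>X. \<bar>x ! i\<bar>) ` {..<d})"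

definition jordan :: "nat \<Rightarrow> nat \<Rightarrow> real" where
  "jordan q p = real p ^ q * (\<Prod>n\<in>{n. prime n \<and> n dvd p}. (1 - 1 / real n ^ q))"

definition stirling_s :: "nat \<Rightarrow> nat \<Rightarrow> int" where
  "stirling_s d i = (-1) ^ (d - i) * int (stirling d i)"

definition c_psi :: "nat \<Rightarrow> nat \<Rightarrow> real" where
  "c_psi p d = 1 / fact (d - 1) * (\<Sum>i=1..d. real_of_int (stirling_s d i) * jordan (i - 1) p)"

end

theory Submission
  imports Defs "HOL-Combinatorics.Permutations"
begin


lemma stirling_s_falling:
  "(\<Sum>i\<le>j. real_of_int (stirling_s j i) * x ^ i) = pochhammer (x - real j + 1) j"
proof -
  have "(\<Sum>i\<le>j. real_of_int (stirling_s j i) * x ^ i) = (-1)^j * (\<Sum>i\<le>j. real (stirling j i) * (-x) ^ i)"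
    unfolding sum_distrib_left
  proof (rule sum.cong)
    fix i assume "i \<in> {..j}"
    then have "i \<le> j" by simp
    then have "(-1::real)^j = (-1)^(j-i) * (-1)^i" by (simp flip: power_add)
    then show "real_of_int (stirling_s j i) * x ^ i = (-1)^j * (real (stirling j i) * (-x) ^ i)"
      by (simp add: stirling_s_def power_minus[of x] )
  qed simp
  also have "\<dots> = (-1)^j * pochhammer (-x) j" by (simp add: stirling_pochhammer)
  also have "\<dots> = pochhammer (x - real j + 1) j" by (simp add: pochhammer_minus)
  finally show ?thesis .
qed

lemma stirling_s_binom:
  assumes "j \<ge> 1" "m \<ge> 1"
  shows "1 / fact (j - 1) * (\<Sum>i=1..j. real_of_int (stirling_s j i) * real m ^ (i - 1)) = real (m - 1 choose (j - 1))"
proof -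
  have "pochhammer (real m - real j + 1) j = fact j * real (m choose j)"
    by (simp add: binomial_gbinomial gbinomial_pochhammer')
  have "(\<Sum>i\<le>j. real_of_int (stirling_s j i) * real m ^ i) = real m * (\<Sum>i=1..j. real_of_int (stirling_s j i) * real m ^ (i - 1))"
  proof -
    have "{..j} = insert 0 {1..j}" by auto
    then have "(\<Sum>i\<le>j. real_of_int (stirling_s j i) * real m ^ i) = (\<Sum>i=1..j. real_of_int (stirling_s j i) * real m ^ i)"
      using assms by (simp add: stirling_s_def)
    also have "\<dots> = (\<Sum>i=1..j. real m * (real_of_int (stirling_s j i) * real m ^ (i - 1)))"
      by (rule sum.cong) (auto simp flip: power_Suc)
    finally show ?thesis by (simp add: sum_distrib_left)
  qed
  moreover have "real (m choose j) * real j = real m * real (m - 1 choose (j - 1))"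
  proof -
    obtain j' m' where "j = Suc j'" "m = Suc m'" using assms by (metis Suc_le_D One_nat_def)
    then show ?thesis using times_binomial_minus1_eq[of j m] assms
      by (metis Suc_times_binomial diff_Suc_1 mult.commute of_nat_mult)
  qed
  moreover have "fact j = real j * fact (j - 1)" using assms by (simp add: fact_reduce)
  ultimately have "real m * (\<Sum>i=1..j. real_of_int (stirling_s j i) * real m ^ (i - 1)) = real m * (fact (j-1) * real (m - 1 choose (j - 1)))"
    using stirling_s_falling[of j "real m"] \<open>pochhammer (real m - real j + 1) j = fact j * real (m choose j)\<close>
    by (simp add: algebra_simps)
  then have "(\<Sum>i=1..j. real_of_int (stirling_s j i) * real m ^ (i - 1)) = fact (j-1) * real (m - 1 choose (j - 1))"
    using assms by simp
  then show ?thesis by simp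
qed



lemma prod_primes_dvd_int:
  fixes X :: "nat set" and c :: int
  assumes "finite X" "\<forall>p\<in>X. prime p"
  shows "int (\<Prod>X) dvd c \<longleftrightarrow> (\<forall>p\<in>X. int p dvd c)"
  using assms
proof (induction X rule: finite_induct)
  case empty
  then show ?case by simp
next
  case (insert p X)
  have pp: "prime p" using insert by simp
  have "\<not> p dvd \<Prod>X"
  proof
    assume "p dvd \<Prod>X"
    then obtain q where "q \<in> X" "p dvd q" using prime_dvd_prod_iff[of X p id] insert pp by auto
    then have "p = q" using primes_dvd_imp_eq[of p q] insert pp by auto
    then show False using insert \<open>q \<in> X\<close> by simp
  qed
  then have "coprime p (\<Prod>X)" using pp prime_imp_coprime by blast
  then have cop: "coprime (int p) (int (\<Prod>X))"
    by (metis coprime_iff_gcd_eq_1 gcd_int_int_eq of_nat_1)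
  have e: "\<Prod>(insert p X) = p * \<Prod>X" using insert by simp
  have "int (\<Prod>(insert p X)) = int p * int (\<Prod>X)" by (simp only: e of_nat_mult)
  then have "int (\<Prod>(insert p X)) dvd c \<longleftrightarrow> int p dvd c \<and> int (\<Prod>X) dvd c"
    using cop by (metis divides_mult dvd_mult_left dvd_mult_right)
  then show ?case using insert by auto
qed

lemma prod_primes_dvd_nat:
  fixes X :: "nat set" and n :: nat
  assumes "finite X" "\<forall>p\<in>X. prime p" "\<forall>p\<in>X. p dvd n"
  shows "\<Prod>X dvd n"
proof -
  have "int (\<Prod>X) dvd int n" using prod_primes_dvd_int[OF assms(1,2), of "int n"] assms(3)
    by (simp only: int_dvd_int_iff)
  then show ?thesis by (simp only: int_dvd_int_iff)
qed

lemma sum_Pow_sign: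
  assumes "finite T"
  shows "(\<Sum>U\<in>Pow T. (-1::real) ^ card U) = (if T = {} then 1 else 0)"
proof -
  have "(\<Prod>x\<in>T. (-1::real) + 1) = (\<Sum>U\<in>Pow T. (\<Prod>x\<in>U. -1) * (\<Prod>x\<in>T-U. 1))"
    by (rule prod_add[OF assms])
  then have "(\<Sum>U\<in>Pow T. (-1::real) ^ card U) = (\<Prod>x\<in>T. (-1::real) + 1)" by simp
  also have "\<dots> = (if T = {} then 1 else 0)" using assms by auto
  finally show ?thesis .
qed

definition pf :: "nat \<Rightarrow> nat set" where "pf n = {p. prime p \<and> p dvd n}"

lemma finite_pf: "n \<ge> 1 \<Longrightarrow> finite (pf n)"
  unfolding pf_def by (rule finite_subset[of _ "{..n}"]) (auto dest: dvd_imp_le)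

lemma pf_prod_dvd: "n \<ge> 1 \<Longrightarrow> U \<subseteq> pf n \<Longrightarrow> \<Prod>U dvd n"
  using prod_primes_dvd_nat[of U n] finite_pf[of n] finite_subset[of U "pf n"] unfolding pf_def by auto

lemma pf_prod_pos: "n \<ge> 1 \<Longrightarrow> U \<subseteq> pf n \<Longrightarrow> \<Prod>U > 0"
  using finite_pf[of n] finite_subset[of U "pf n"] unfolding pf_def
  by (metis (no_types, lifting) dvd_0_left_iff gr0I less_one not_one_le_zero pf_def pf_prod_dvd
      )

lemma pf_div_pos: "n \<ge> 1 \<Longrightarrow> U \<subseteq> pf n \<Longrightarrow> n div \<Prod>U \<ge> 1"
  using pf_prod_dvd[of n U] pf_prod_pos[of n U]
  by (metis One_nat_def dvd_div_eq_0_iff less_one not_less not_one_le_zero)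

lemma jordan_expand:
  assumes "n \<ge> 1"
  shows "jordan q n = (\<Sum>U\<in>Pow (pf n). (-1) ^ card U * real (n div \<Prod>U) ^ q)"
proof -
  have fin: "finite (pf n)" using finite_pf assms .
  have "jordan q n = real n ^ q * (\<Prod>p\<in>pf n. (- 1 / real p ^ q) + 1)"
    unfolding jordan_def pf_def by simp
  also have "\<dots> = real n ^ q * (\<Sum>U\<in>Pow (pf n). (\<Prod>p\<in>U. - 1 / real p ^ q) * (\<Prod>p\<in>pf n - U. 1))"
    by (subst prod_add[OF fin]) simp
  also have "\<dots> = (\<Sum>U\<in>Pow (pf n). (-1) ^ card U * real (n div \<Prod>U) ^ q)"
    unfolding sum_distrib_left
  proof (rule sum.cong)
    fix U assume U: "U \<in> Pow (pf n)"
    then have finU: "finite U" using fin finite_subset by auto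
    have "(\<Prod>p\<in>U. - 1 / real p ^ q) = (\<Prod>p\<in>U. (-1) * (1 / real p ^ q))" by simp
    also have "\<dots> = (-1) ^ card U * (\<Prod>p\<in>U. 1 / real p ^ q)" by (simp only: prod.distrib prod_constant)
    also have "\<dots> = (-1) ^ card U / (\<Prod>p\<in>U. real p) ^ q" by (simp add: prod_dividef prod_power_distrib)
    also have "\<dots> = (-1) ^ card U / (real (\<Prod>U)) ^ q" by simp
    finally have "(\<Prod>p\<in>U. - 1 / real p ^ q) = (-1) ^ card U / (real (\<Prod>U)) ^ q" .
    moreover have "real (n div \<Prod>U) = real n / real (\<Prod>U)"
      using pf_prod_dvd[of n U] assms U by (simp add: real_of_nat_div)
    ultimately show "real n ^ q * ((\<Prod>p\<in>U. - 1 / real p ^ q) * (\<Prod>p\<in>pf n - U. 1)) =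
        (-1) ^ card U * real (n div \<Prod>U) ^ q"
      by (simp add: power_divide)
  qed simp
  finally show ?thesis .
qed



definition norm1 :: "int list \<Rightarrow> int" where "norm1 x = sum_list (map abs x)"
definition Sset :: "nat \<Rightarrow> nat \<Rightarrow> int list set" where
  "Sset d m = {x. length x = d \<and> norm1 x = int m}"
definition Mc :: "nat \<Rightarrow> nat \<Rightarrow> nat" where "Mc d m = card (Sset d m)"

lemma norm1_Nil [simp]: "norm1 [] = 0" by (simp add: norm1_def)
lemma norm1_Cons [simp]: "norm1 (a # x) = \<bar>a\<bar> + norm1 x" by (simp add: norm1_def)
lemma norm1_nonneg: "norm1 x \<ge> 0" by (induction x) auto
lemma abs_le_norm1: "c \<in> set x \<Longrightarrow> \<bar>c\<bar> \<le> norm1 x"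
  by (induction x) (auto simp: norm1_nonneg add_increasing2 add_increasing)

lemma finite_norm1_le: "finite {x. length x = d \<and> norm1 x \<le> int m}"
proof (rule finite_subset)
  show "{x. length x = d \<and> norm1 x \<le> int m} \<subseteq> {xs. set xs \<subseteq> {-int m..int m} \<and> length xs = d}"
    using abs_le_norm1 by fastforce
  show "finite {xs. set xs \<subseteq> {-int m..int m} \<and> length xs = d}"
    by (rule finite_lists_length_eq) simp
qed

lemma finite_Sset: "finite (Sset d m)"
  by (rule finite_subset[OF _ finite_norm1_le[of d m]]) (auto simp: Sset_def)

lemma card_abs_eq: "card {a::int. \<bar>a\<bar> = int k} = (if k = 0 then 1 else 2)"
proof -
  have "{a::int. \<bar>a\<bar> = int k} = {int k, - int k}" by auto
  then show ?thesis by simp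
qed

lemma Sset_0: "Sset 0 m = (if m = 0 then {[]} else {})"
  by (auto simp: Sset_def)

lemma Mc_0: "Mc 0 m = (if m = 0 then 1 else 0)"
  by (simp add: Mc_def Sset_0)

lemma Mc_Suc: "Mc (Suc d) m = Mc d m + 2 * (\<Sum>t<m. Mc d t)"
proof -
  define F where "F t = (\<lambda>(a, y). (a::int) # y) ` ({a. \<bar>a\<bar> = int (m - t)} \<times> Sset d t)" for t
  have eq: "Sset (Suc d) m = (\<Union>t\<in>{..m}. F t)"
  proof (intro equalityI subsetI)
    fix x assume "x \<in> Sset (Suc d) m"
    then obtain a y where x: "x = a # y" "length y = d" "\<bar>a\<bar> + norm1 y = int m"
      unfolding Sset_def by (cases x) auto
    define t where "t = nat (norm1 y)"
    have "t \<le> m" "\<bar>a\<bar> = int (m - t)" "norm1 y = int t"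
      using x norm1_nonneg[of y] unfolding t_def by auto
    then show "x \<in> (\<Union>t\<in>{..m}. F t)"
      unfolding F_def Sset_def using x by (auto intro!: bexI[of _ t] image_eqI[of _ _ "(a, y)"])
  next
    fix x assume "x \<in> (\<Union>t\<in>{..m}. F t)"
    then show "x \<in> Sset (Suc d) m" unfolding F_def Sset_def by auto
  qed
  have cardF: "card (F t) = (if m - t = 0 then 1 else 2) * Mc d t" for t
  proof -
    have "inj_on (\<lambda>(a, y). (a::int) # y) ({a. \<bar>a\<bar> = int (m - t)} \<times> Sset d t)"
      by (auto simp: inj_on_def)
    then have "card (F t) = card ({a. \<bar>a\<bar> = int (m - t)} \<times> Sset d t)"
      unfolding F_def by (rule card_image)
    also have "\<dots> = (if m - t = 0 then 1 else 2) * Mc d t"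
      by (simp add: card_cartesian_product card_abs_eq Mc_def)
    finally show ?thesis .
  qed
  have "Mc (Suc d) m = card (\<Union>t\<in>{..m}. F t)" by (simp add: Mc_def eq)
  also have "\<dots> = (\<Sum>t\<le>m. card (F t))"
  proof (rule card_UN_disjoint)
    have fin: "finite {a::int. \<bar>a\<bar> = int k}" for k
      by (rule finite_subset[of _ "{-int k..int k}"]) auto
    show "\<forall>i\<in>{..m}. finite (F i)" unfolding F_def
      by (intro ballI finite_imageI finite_cartesian_product fin finite_Sset)
    show "\<forall>i\<in>{..m}. \<forall>j\<in>{..m}. i \<noteq> j \<longrightarrow> F i \<inter> F j = {}"
      by (auto simp: F_def Sset_def)
  qed simp
  also have "\<dots> = (\<Sum>t\<in>insert m {..<m}. card (F t))"
    by (rule sum.cong) auto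
  also have "\<dots> = Mc d m + (\<Sum>t<m. 2 * Mc d t)"
    by (subst sum.insert) (auto simp: cardF intro!: sum.cong)
  finally show ?thesis by (simp add: sum_distrib_left)
qed

fun ncomp :: "nat \<Rightarrow> nat \<Rightarrow> nat" where
  "ncomp m 0 = (if m = 0 then 1 else 0)"
| "ncomp m (Suc j) = (\<Sum>t<m. ncomp t j)"

lemma sum_choose_lessThan: "(\<Sum>t<m. t choose j) = m choose Suc j"
  by (induction m) auto

lemma comp_0_Suc: "ncomp 0 (Suc j) = 0" by simp

lemma comp_Suc_Suc: "ncomp (Suc m) (Suc j) = m choose j"
proof (induction j arbitrary: m)
  case 0
  have "(\<Sum>t<Suc m. ncomp t 0) = (\<Sum>t<Suc m. (if t = 0 then 1 else 0))"
    by (rule sum.cong) auto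
  also have "\<dots> = 1" by (simp add: sum.delta)
  finally show ?case by simp
next
  case (Suc j)
  have "ncomp (Suc m) (Suc (Suc j)) = (\<Sum>t<Suc m. ncomp t (Suc j))" by simp
  also have "\<dots> = ncomp 0 (Suc j) + (\<Sum>t<m. ncomp (Suc t) (Suc j))"
    by (rule sum.lessThan_Suc_shift)
  also have "\<dots> = (\<Sum>t<m. t choose j)" using Suc by simp
  also have "\<dots> = m choose Suc j" by (rule sum_choose_lessThan)
  finally show ?case .
qed

lemma Mc_formula: "Mc d m = (\<Sum>j\<le>d. 2 ^ j * (d choose j) * ncomp m j)"
proof (induction d arbitrary: m)
  case 0
  then show ?case by (simp add: Mc_0)
next
  case (Suc d)
  have A: "(\<Sum>j\<le>d. 2 ^ j * (d choose j) * ncomp m j) = ncomp m 0 + (\<Sum>j\<le>d. 2 ^ Suc j * (d choose Suc j) * ncomp m (Suc j))"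
  proof -
    have "(\<Sum>j\<le>d. 2 ^ j * (d choose j) * ncomp m j) = (\<Sum>j\<le>Suc d. 2 ^ j * (d choose j) * ncomp m j)"
      by simp
    also have "\<dots> = ncomp m 0 + (\<Sum>j\<le>d. 2 ^ Suc j * (d choose Suc j) * ncomp m (Suc j))"
      by (subst sum.atMost_Suc_shift) simp
    finally show ?thesis .
  qed
  have B: "2 * (\<Sum>t<m. \<Sum>j\<le>d. 2 ^ j * (d choose j) * ncomp t j) = (\<Sum>j\<le>d. 2 ^ Suc j * (d choose j) * ncomp m (Suc j))"
  proof -
    have "2 * (\<Sum>t<m. \<Sum>j\<le>d. 2 ^ j * (d choose j) * ncomp t j) = (\<Sum>j\<le>d. \<Sum>t<m. 2 * (2 ^ j * (d choose j) * ncomp t j))"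
      by (simp add: sum_distrib_left sum.swap[of _ "{..<m}"])
    also have "\<dots> = (\<Sum>j\<le>d. 2 ^ Suc j * (d choose j) * ncomp m (Suc j))"
      by (rule sum.cong) (simp_all add: sum_distrib_left mult.assoc)
    finally show ?thesis .
  qed
  have "(\<Sum>j\<le>Suc d. 2 ^ j * (Suc d choose j) * ncomp m j) = ncomp m 0 + (\<Sum>j\<le>d. 2 ^ Suc j * (Suc d choose Suc j) * ncomp m (Suc j))"
    by (subst sum.atMost_Suc_shift) simp
  also have "\<dots> = ncomp m 0 + (\<Sum>j\<le>d. 2 ^ Suc j * (d choose Suc j) * ncomp m (Suc j)) + (\<Sum>j\<le>d. 2 ^ Suc j * (d choose j) * ncomp m (Suc j))"
    by (simp add: sum.distrib algebra_simps)
  also have "\<dots> = Mc (Suc d) m"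
    unfolding Mc_Suc Suc.IH A B by simp
  finally show ?case by simp
qed



definition Prim :: "nat \<Rightarrow> nat \<Rightarrow> int list set" where
  "Prim d n = {x \<in> Sset d n. primitive x}"

lemma norm1_zero: "set x \<subseteq> {0} \<Longrightarrow> norm1 x = 0"
  by (induction x) auto

lemma dvd_norm1: "(\<forall>c\<in>set x. k dvd c) \<Longrightarrow> k dvd norm1 x"
  by (induction x) auto

lemma prim_iff:
  assumes "n \<ge> 1" "x \<in> Sset d n"
  shows "primitive x \<longleftrightarrow> (\<forall>p\<in>pf n. \<not> (\<forall>c\<in>set x. int p dvd c))"
proof
  assume "primitive x"
  then have g: "Gcd (set x) = 1" by (simp add: primitive_def)
  show "\<forall>p\<in>pf n. \<not> (\<forall>c\<in>set x. int p dvd c)"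
  proof (intro ballI notI)
    fix p assume p: "p \<in> pf n" and all: "\<forall>c\<in>set x. int p dvd c"
    then have "int p dvd Gcd (set x)" by (intro Gcd_greatest) auto
    then have "int p dvd 1" using g by simp
    then show False using p by (auto simp: pf_def)
  qed
next
  assume H: "\<forall>p\<in>pf n. \<not> (\<forall>c\<in>set x. int p dvd c)"
  show "primitive x"
  proof (rule ccontr)
    assume np: "\<not> primitive x"
    define g where "g = Gcd (set x)"
    have "g \<noteq> 1" using np by (simp add: primitive_def g_def)
    have "g \<noteq> 0"
    proof
      assume "g = 0"
      then have "set x \<subseteq> {0}" by (simp add: g_def)
      then have "norm1 x = 0" by (rule norm1_zero)
      then show False using assms by (simp add: Sset_def)
    qed
    have "g \<ge> 0" by (simp add: g_def)
    then have "nat g \<noteq> 1" using \<open>g \<noteq> 1\<close> by auto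
    then obtain p where p: "prime p" "p dvd nat g" using prime_factor_nat by blast
    have "int p dvd g" using p \<open>g \<ge> 0\<close> by (metis int_dvd_int_iff int_nat_eq)
    then have all: "\<forall>c\<in>set x. int p dvd c" unfolding g_def by (meson Gcd_dvd dvd_trans)
    then have "int p dvd norm1 x" by (rule dvd_norm1)
    then have "p dvd n" using assms by (simp add: Sset_def)
    then have "p \<in> pf n" using p by (simp add: pf_def)
    then show False using H all by blast
  qed
qed

lemma norm1_scale: "norm1 (map ((*) k) y) = \<bar>k\<bar> * norm1 y"
  by (induction y) (auto simp: abs_mult algebra_simps)

lemma card_dvd_all:
  assumes "k \<ge> 1" "k dvd n"
  shows "card {x \<in> Sset d n. \<forall>c\<in>set x. int k dvd c} = Mc d (n div k)"
proof -
  have eq: "{x \<in> Sset d n. \<forall>c\<in>set x. int k dvd c} = map ((*) (int k)) ` Sset d (n div k)"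
  proof (intro equalityI subsetI)
    fix x assume x: "x \<in> {x \<in> Sset d n. \<forall>c\<in>set x. int k dvd c}"
    define y where "y = map (\<lambda>c. c div int k) x"
    have "map ((*) (int k)) y = x" unfolding y_def using x
      by (simp add: map_idI)
    moreover have "int k * norm1 y = int n" using x norm1_scale[of "int k" y] \<open>map ((*) (int k)) y = x\<close>
      by (simp add: Sset_def)
    moreover have "int n = int k * int (n div k)" using assms(2)
      by (metis dvd_mult_div_cancel of_nat_mult)
    ultimately have "norm1 y = int (n div k)" using assms(1) by simp
    then have "y \<in> Sset d (n div k)" using x by (simp add: Sset_def y_def)
    with \<open>map ((*) (int k)) y = x\<close> show "x \<in> map ((*) (int k)) ` Sset d (n div k)" by blast
  next
    fix x assume "x \<in> map ((*) (int k)) ` Sset d (n div k)"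
    then obtain y where y: "y \<in> Sset d (n div k)" "x = map ((*) (int k)) y" by auto
    have "norm1 x = int n" using y norm1_scale[of "int k" y] assms
      by (simp add: Sset_def flip: of_nat_mult)
    then show "x \<in> {x \<in> Sset d n. \<forall>c\<in>set x. int k dvd c}"
      using y by (auto simp: Sset_def)
  qed
  have "inj_on (map ((*) (int k))) (Sset d (n div k))"
  proof -
    have "inj ((*) (int k))" using assms by (auto simp: inj_def)
    then have "inj (map ((*) (int k)))" by (rule inj_mapI)
    then show ?thesis by (rule inj_on_subset) simp
  qed
  then show ?thesis unfolding eq Mc_def by (rule card_image)
qed

lemma card_Prim:
  assumes "n \<ge> 1"
  shows "real (card (Prim d n)) = (\<Sum>U\<in>Pow (pf n). (-1) ^ card U * real (Mc d (n div \<Prod>U)))"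
proof -
  define S where "S = Sset d n"
  define T where "T x = {p \<in> pf n. \<forall>c\<in>set x. int p dvd c}" for x
  have finS: "finite S" by (simp add: S_def finite_Sset)
  have finP: "finite (pf n)" using assms by (rule finite_pf)
  have finT: "finite (T x)" for x using finP by (simp add: T_def)
  have "real (card (Prim d n)) = (\<Sum>x\<in>Prim d n. 1)" by simp
  also have "\<dots> = (\<Sum>x\<in>S. if primitive x then 1 else 0)"
    unfolding Prim_def S_def by (rule sum.inter_filter[OF finite_Sset])
  also have "\<dots> = (\<Sum>x\<in>S. \<Sum>U\<in>Pow (T x). (-1::real) ^ card U)"
  proof (rule sum.cong)
    fix x assume "x \<in> S"
    then have "primitive x \<longleftrightarrow> T x = {}" using prim_iff[OF assms, of x d] by (auto simp: S_def T_def)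
    then show "(if primitive x then 1 else 0) = (\<Sum>U\<in>Pow (T x). (-1::real) ^ card U)"
      by (simp add: sum_Pow_sign[OF finT])
  qed simp
  also have "\<dots> = (\<Sum>x\<in>S. \<Sum>U\<in>Pow (pf n). if U \<subseteq> T x then (-1::real) ^ card U else 0)"
  proof (rule sum.cong)
    fix x
    have "Pow (T x) = {U \<in> Pow (pf n). U \<subseteq> T x}" by (auto simp: T_def)
    then show "(\<Sum>U\<in>Pow (T x). (-1::real) ^ card U) = (\<Sum>U\<in>Pow (pf n). if U \<subseteq> T x then (-1::real) ^ card U else 0)"
      using sum.inter_filter[of "Pow (pf n)" "\<lambda>U. (-1::real) ^ card U" "\<lambda>U. U \<subseteq> T x"] finP by simp
  qed simp
  also have "\<dots> = (\<Sum>U\<in>Pow (pf n). \<Sum>x\<in>S. if U \<subseteq> T x then (-1::real) ^ card U else 0)"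
    by (rule sum.swap)
  also have "\<dots> = (\<Sum>U\<in>Pow (pf n). (-1) ^ card U * real (Mc d (n div \<Prod>U)))"
  proof (rule sum.cong)
    fix U assume U: "U \<in> Pow (pf n)"
    have finU: "finite U" using U finP finite_subset by auto
    have prU: "\<forall>p\<in>U. prime p" using U by (auto simp: pf_def)
    have set_eq: "{x \<in> S. U \<subseteq> T x} = {x \<in> Sset d n. \<forall>c\<in>set x. int (\<Prod>U) dvd c}"
      using U prod_primes_dvd_int[OF finU prU] by (auto simp: S_def T_def)
    have "(\<Sum>x\<in>S. if U \<subseteq> T x then (-1::real) ^ card U else 0) = (\<Sum>x\<in>{x \<in> S. U \<subseteq> T x}. (-1::real) ^ card U)"
      by (rule sum.inter_filter[OF finS, symmetric])
    also have "\<dots> = (-1) ^ card U * real (card {x \<in> S. U \<subseteq> T x})" by simp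
    also have "card {x \<in> S. U \<subseteq> T x} = Mc d (n div \<Prod>U)"
      unfolding set_eq using pf_prod_dvd[OF assms, of U] pf_prod_pos[OF assms, of U] U
      by (intro card_dvd_all) auto
    finally show "(\<Sum>x\<in>S. if U \<subseteq> T x then (-1::real) ^ card U else 0) = (-1) ^ card U * real (Mc d (n div \<Prod>U))" .
  qed simp
  finally show ?thesis .
qed



lemma comp_eq: "m \<ge> 1 \<Longrightarrow> j \<ge> 1 \<Longrightarrow> ncomp m j = (m - 1 choose (j - 1))"
  using comp_Suc_Suc[of "m - 1" "j - 1"] by simp

lemma c_psi_expand:
  assumes "n \<ge> 1" "j \<ge> 1"
  shows "c_psi n j = (\<Sum>U\<in>Pow (pf n). (-1) ^ card U * real (ncomp (n div \<Prod>U) j))"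
proof -
  have "c_psi n j = 1 / fact (j - 1) * (\<Sum>i=1..j. real_of_int (stirling_s j i) *
      (\<Sum>U\<in>Pow (pf n). (-1) ^ card U * real (n div \<Prod>U) ^ (i - 1)))"
    unfolding c_psi_def using jordan_expand[OF assms(1)] by simp
  also have "\<dots> = (\<Sum>U\<in>Pow (pf n). (-1) ^ card U * (1 / fact (j - 1) * (\<Sum>i=1..j. real_of_int (stirling_s j i) * real (n div \<Prod>U) ^ (i - 1))))"
    by (simp add: sum_distrib_left mult.assoc mult.left_commute) (rule sum.swap)
  also have "\<dots> = (\<Sum>U\<in>Pow (pf n). (-1) ^ card U * real (ncomp (n div \<Prod>U) j))"
  proof (rule sum.cong)
    fix U assume "U \<in> Pow (pf n)"
    then have m: "n div \<Prod>U \<ge> 1" using pf_div_pos[OF assms(1)] by auto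
    show "(-1) ^ card U * (1 / fact (j - 1) * (\<Sum>i=1..j. real_of_int (stirling_s j i) * real (n div \<Prod>U) ^ (i - 1))) =
        (-1) ^ card U * real (ncomp (n div \<Prod>U) j)"
      using stirling_s_binom[OF assms(2) m] comp_eq[OF m assms(2)] by simp
  qed simp
  finally show ?thesis .
qed

lemma Mc_formula_real:
  assumes "m \<ge> 1"
  shows "real (Mc d m) = (\<Sum>j=1..d. 2 ^ j * real (d choose j) * real (ncomp m j))"
proof -
  have "{..d} = insert 0 {1..d}" by auto
  then have "Mc d m = (\<Sum>j=1..d. 2 ^ j * (d choose j) * ncomp m j)"
    using assms by (simp add: Mc_formula)
  then show ?thesis by simp
qed

lemma N_formula:
  assumes "n \<ge> 1"
  shows "real (card (Prim d n)) = (\<Sum>j=1..d. 2 ^ j * real (d choose j) * c_psi n j)"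
proof -
  have "(\<Sum>j=1..d. 2 ^ j * real (d choose j) * c_psi n j) =
      (\<Sum>j=1..d. 2 ^ j * real (d choose j) * (\<Sum>U\<in>Pow (pf n). (-1) ^ card U * real (ncomp (n div \<Prod>U) j)))"
    by (rule sum.cong) (simp_all add: c_psi_expand[OF assms])
  also have "\<dots> = (\<Sum>U\<in>Pow (pf n). (-1) ^ card U * (\<Sum>j=1..d. 2 ^ j * real (d choose j) * real (ncomp (n div \<Prod>U) j)))"
    by (simp add: sum_distrib_left mult.assoc mult.left_commute) (rule sum.swap)
  also have "\<dots> = (\<Sum>U\<in>Pow (pf n). (-1) ^ card U * real (Mc d (n div \<Prod>U)))"
  proof (rule sum.cong)
    fix U assume "U \<in> Pow (pf n)"
    then have m: "n div \<Prod>U \<ge> 1" using pf_div_pos[OF assms(1)] by auto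
    show "(-1) ^ card U * (\<Sum>j=1..d. 2 ^ j * real (d choose j) * real (ncomp (n div \<Prod>U) j)) =
        (-1) ^ card U * real (Mc d (n div \<Prod>U))"
      using Mc_formula_real[OF m] by simp
  qed simp
  also have "\<dots> = real (card (Prim d n))" using card_Prim[OF assms] by simp
  finally show ?thesis by simp
qed

lemma c_psi_zero:
  assumes "n \<ge> 1" "n < j"
  shows "c_psi n j = 0"
proof -
  have "ncomp (n div \<Prod>U) j = 0" if "U \<in> Pow (pf n)" for U
  proof -
    have m: "n div \<Prod>U \<ge> 1" using pf_div_pos[OF assms(1)] that by auto
    have "n div \<Prod>U \<le> n" by (rule div_le_dividend)
    then have "n div \<Prod>U - 1 < j - 1" using m assms by linarith
    then show ?thesis using comp_eq[OF m] assms by simp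
  qed
  then show ?thesis using c_psi_expand[OF assms(1)] assms by simp
qed



definition Aset :: "nat \<Rightarrow> nat \<Rightarrow> int list set" where
  "Aset d p = {x. length x = d \<and> norm1 x \<le> int p \<and> primitive x}"

lemma norm1_nth: "norm1 x = (\<Sum>i<length x. \<bar>x ! i\<bar>)"
  by (simp add: norm1_def sum_list_sum_nth atLeast0LessThan)

lemma norm1_zero_iff: "norm1 x = 0 \<longleftrightarrow> set x \<subseteq> {0}"
  by (induction x) (auto simp: norm1_nonneg add_nonneg_eq_0_iff)

lemma primitive_nonzero: "primitive x \<Longrightarrow> norm1 x \<noteq> 0"
  unfolding primitive_def norm1_zero_iff by (metis Gcd_0_iff zero_neq_one)

lemma primitive_ex: "primitive x \<Longrightarrow> \<exists>i<length x. x ! i \<noteq> 0"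
proof (rule ccontr)
  assume "primitive x" "\<not> (\<exists>i<length x. x ! i \<noteq> 0)"
  then have "set x \<subseteq> {0}" by (auto simp: in_set_conv_nth)
  then show False using \<open>primitive x\<close> unfolding primitive_def by (metis Gcd_0_iff zero_neq_one)
qed

lemma finite_Aset: "finite (Aset d p)"
  by (rule finite_subset[OF _ finite_norm1_le[of d p]]) (auto simp: Aset_def)

lemma BP_alt: "BP d p = {x \<in> Aset d p. first_nonzero_pos x}"
  by (auto simp: BP_def Aset_def norm1_nth)

lemma Aset_UN: "Aset d p = (\<Union>n\<in>{1..p}. Prim d n)"
proof (intro equalityI subsetI)
  fix x assume x: "x \<in> Aset d p"
  define n where "n = nat (norm1 x)"
  have "norm1 x \<noteq> 0" using x primitive_nonzero by (auto simp: Aset_def)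
  then have "n \<in> {1..p}" "norm1 x = int n" using x norm1_nonneg[of x] by (auto simp: n_def Aset_def)
  then show "x \<in> (\<Union>n\<in>{1..p}. Prim d n)" using x by (auto simp: Prim_def Sset_def Aset_def)
next
  fix x assume "x \<in> (\<Union>n\<in>{1..p}. Prim d n)"
  then show "x \<in> Aset d p" by (auto simp: Prim_def Sset_def Aset_def)
qed

lemma finite_Prim: "finite (Prim d n)"
  by (rule finite_subset[OF _ finite_Sset[of d n]]) (auto simp: Prim_def)

lemma sum_Aset: "(\<Sum>x\<in>Aset d p. f x) = (\<Sum>n=1..p. \<Sum>x\<in>Prim d n. f x)"
  unfolding Aset_UN
proof (rule sum.UNION_disjoint)
  show "\<forall>i\<in>{1..p}. finite (Prim d i)" using finite_Prim by blast
  show "\<forall>i\<in>{1..p}. \<forall>j\<in>{1..p}. i \<noteq> j \<longrightarrow> Prim d i \<inter> Prim d j = {}"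
    by (auto simp: Prim_def Sset_def)
qed simp

lemma card_Aset: "real (card (Aset d p)) = (\<Sum>n=1..p. real (card (Prim d n)))"
  using sum_Aset[where f = "\<lambda>_. 1::real" and d = d and p = p] by simp

lemma norm_Aset: "(\<Sum>x\<in>Aset d p. real_of_int (norm1 x)) = (\<Sum>n=1..p. real n * real (card (Prim d n)))"
proof -
  have "(\<Sum>x\<in>Aset d p. real_of_int (norm1 x)) = (\<Sum>n=1..p. \<Sum>x\<in>Prim d n. real_of_int (norm1 x))"
    by (rule sum_Aset)
  also have "\<dots> = (\<Sum>n=1..p. real n * real (card (Prim d n)))"
    by (rule sum.cong) (auto simp: Prim_def Sset_def)
  finally show ?thesis .
qed

lemma Gcd_uminus: "Gcd (uminus ` (S::int set)) = Gcd S"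
proof -
  have "Gcd (uminus ` S) = Gcd (normalize ` uminus ` S)" by simp
  also have "normalize ` uminus ` S = normalize ` S" by (auto simp: image_image)
  finally show ?thesis by simp
qed

lemma primitive_neg: "primitive (map uminus x) \<longleftrightarrow> primitive x"
  by (simp add: primitive_def Gcd_uminus)

lemma norm1_neg: "norm1 (map uminus x) = norm1 x"
  by (simp add: norm1_def o_def)

lemma fnp_char:
  assumes "k < length y" "y ! k \<noteq> 0" "\<forall>i<k. y ! i = 0"
  shows "first_nonzero_pos y \<longleftrightarrow> y ! k > 0"
proof
  assume "first_nonzero_pos y"
  then obtain k' where k': "k' < length y" "\<forall>i<k'. y ! i = 0" "y ! k' > 0"
    by (auto simp: first_nonzero_pos_def)
  have "k' = k"
  proof (rule ccontr)
    assume "k' \<noteq> k"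
    then consider "k' < k" | "k < k'" by linarith
    then show False using assms k' by cases auto
  qed
  then show "y ! k > 0" using k' by simp
next
  assume "y ! k > 0"
  then show "first_nonzero_pos y" using assms by (auto simp: first_nonzero_pos_def)
qed

lemma fnp_neg:
  assumes "\<exists>i<length x. x ! i \<noteq> 0"
  shows "first_nonzero_pos (map uminus x) \<longleftrightarrow> \<not> first_nonzero_pos x"
proof -
  define k where "k = (LEAST i. i < length x \<and> x ! i \<noteq> 0)"
  have k: "k < length x \<and> x ! k \<noteq> 0" unfolding k_def using assms by (metis (mono_tags, lifting) LeastI)
  have before: "\<forall>i<k. x ! i = 0"
  proof (intro allI impI)
    fix i assume "i < k"
    then have "\<not> (i < length x \<and> x ! i \<noteq> 0)" unfolding k_def by (rule not_less_Least)
    then show "x ! i = 0" using \<open>i < k\<close> k by auto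
  qed
  have "first_nonzero_pos x \<longleftrightarrow> x ! k > 0" using fnp_char[of k x] k before by auto
  moreover have "first_nonzero_pos (map uminus x) \<longleftrightarrow> (map uminus x) ! k > 0"
    using fnp_char[of k "map uminus x"] k before by auto
  ultimately show ?thesis using k by auto
qed

lemma sum_Aset_BP:
  assumes "\<And>x. length x = d \<Longrightarrow> f (map uminus x) = f x"
  shows "(\<Sum>x\<in>Aset d p. f x) = 2 * (\<Sum>x\<in>BP d p. (f x :: real))"
proof -
  have sub: "BP d p \<subseteq> Aset d p" by (auto simp: BP_alt)
  have diff: "Aset d p - BP d p = map uminus ` BP d p"
  proof (intro equalityI subsetI)
    fix x assume x: "x \<in> Aset d p - BP d p"
    then have "map uminus x \<in> BP d p"
      using fnp_neg[of x] primitive_ex[of x]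
      by (auto simp: BP_alt Aset_def primitive_neg norm1_neg)
    moreover have "x = map uminus (map uminus x)" by (simp add: map_idI)
    ultimately show "x \<in> map uminus ` BP d p" by blast
  next
    fix x assume "x \<in> map uminus ` BP d p"
    then obtain y where y: "y \<in> BP d p" "x = map uminus y" by auto
    then show "x \<in> Aset d p - BP d p"
      using fnp_neg[of y] primitive_ex[of y]
      by (auto simp: BP_alt Aset_def primitive_neg norm1_neg)
  qed
  have inj: "inj_on (map uminus) (BP d p)"
  proof -
    have "inj (uminus :: int \<Rightarrow> int)" by (simp add: inj_def)
    then have "inj (map (uminus :: int \<Rightarrow> int))" by (rule inj_mapI)
    then show ?thesis by (rule inj_on_subset) simp
  qed
  have "(\<Sum>x\<in>Aset d p. f x) = (\<Sum>x\<in>Aset d p - BP d p. f x) + (\<Sum>x\<in>BP d p. f x)"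
    by (rule sum.subset_diff[OF sub finite_Aset])
  also have "(\<Sum>x\<in>Aset d p - BP d p. f x) = (\<Sum>x\<in>BP d p. f (map uminus x))"
    unfolding diff by (rule sum.reindex[OF inj, unfolded o_def])
  also have "(\<Sum>x\<in>BP d p. f (map uminus x)) = (\<Sum>x\<in>BP d p. f x)"
    by (rule sum.cong) (auto simp: BP_def assms)
  finally show ?thesis by simp
qed

lemma coord_sym:
  assumes "i < d"
  shows "(\<Sum>x\<in>Aset d p. real_of_int \<bar>x ! i\<bar>) = (\<Sum>x\<in>Aset d p. real_of_int \<bar>x ! 0\<bar>)"
proof -
  define t where "t = Transposition.transpose 0 i"
  define \<sigma> where "\<sigma> x = permute_list t x" for x :: "int list"
  have tp: "t permutes {..<d}" unfolding t_def using assms by (intro permutes_swap_id) auto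
  have len: "length (\<sigma> x) = length x" for x by (simp add: \<sigma>_def)
  have inv: "\<sigma> (\<sigma> x) = x" if "length x = d" for x
  proof (rule nth_equalityI)
    show "length (\<sigma> (\<sigma> x)) = length x" by (simp add: len)
    fix k assume "k < length (\<sigma> (\<sigma> x))"
    then have k: "k < d" using that by (simp add: len)
    have "t k < d" using permutes_in_image[OF tp] k by auto
    then show "\<sigma> (\<sigma> x) ! k = x ! k"
      using k that tp by (simp add: \<sigma>_def permute_list_nth t_def)
  qed
  have inA: "\<sigma> x \<in> Aset d p" if "x \<in> Aset d p" for x
  proof -
    have ld: "length x = d" using that by (simp add: Aset_def)
    have ms: "mset (\<sigma> x) = mset x" using tp ld by (simp add: \<sigma>_def)
    then have "set (\<sigma> x) = set x" by (metis set_mset_mset)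
    moreover have "norm1 (\<sigma> x) = norm1 x"
      unfolding norm1_def using ms by (metis mset_map sum_mset_sum_list)
    ultimately show ?thesis using that by (simp add: Aset_def primitive_def len)
  qed
  have at0: "\<sigma> x ! 0 = x ! i" if "length x = d" for x
    using that tp assms by (simp add: \<sigma>_def permute_list_nth t_def)
  show ?thesis
  proof (rule sum.reindex_bij_witness[of _ \<sigma> \<sigma>])
    fix a assume "a \<in> Aset d p"
    then show "\<sigma> (\<sigma> a) = a" "\<sigma> a \<in> Aset d p" "real_of_int \<bar>\<sigma> a ! 0\<bar> = real_of_int \<bar>a ! i\<bar>"
      using inv inA at0 by (auto simp: Aset_def)
  next
    fix b assume "b \<in> Aset d p"
    then show "\<sigma> (\<sigma> b) = b" "\<sigma> b \<in> Aset d p"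
      using inv inA by (auto simp: Aset_def)
  qed
qed



lemma sum_shift_start:
  fixes j p :: nat
  assumes "j \<ge> 1" "\<And>n. 1 \<le> n \<Longrightarrow> n < j \<Longrightarrow> f n = (0::real)"
  shows "(\<Sum>n=1..p. f n) = (\<Sum>n=j..p. f n)"
proof (rule sum.mono_neutral_right)
  show "{j..p} \<subseteq> {1..p}" using assms(1) by auto
  show "\<forall>i\<in>{1..p} - {j..p}. f i = 0" using assms by auto
qed simp

theorem theorem1p1:
  fixes d p :: nat
  assumes "d \<ge> 1" and "p \<ge> 1"
  shows "(real (card (BP d p)) =
           1 / 2 * (\<Sum>j=1..d. 2 ^ j * real (d choose j) * (\<Sum>i=j..p. c_psi i j))) \<and>
         (real_of_int (kappa d (BP d p)) =
           1 / (2 * real d) * (\<Sum>j=1..d. 2 ^ j * real (d choose j) * (\<Sum>i=j..p. real i * c_psi i j)))"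
proof -
  have sw: "(\<Sum>n=1..p. g n * (\<Sum>j=1..d. 2 ^ j * real (d choose j) * c_psi n j)) =
      (\<Sum>j=1..d. 2 ^ j * real (d choose j) * (\<Sum>i=j..p. g i * c_psi i j))" for g :: "nat \<Rightarrow> real"
  proof -
    have "(\<Sum>n=1..p. g n * (\<Sum>j=1..d. 2 ^ j * real (d choose j) * c_psi n j)) =
        (\<Sum>j=1..d. 2 ^ j * real (d choose j) * (\<Sum>n=1..p. g n * c_psi n j))"
      by (simp add: sum_distrib_left mult.assoc mult.left_commute) (rule sum.swap)
    also have "\<dots> = (\<Sum>j=1..d. 2 ^ j * real (d choose j) * (\<Sum>i=j..p. g i * c_psi i j))"
    proof (rule sum.cong[OF refl])
      fix j assume "j \<in> {1..d}"
      then have j1: "j \<ge> 1" by simp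
      have "(\<Sum>n=1..p. g n * c_psi n j) = (\<Sum>n=j..p. g n * c_psi n j)"
        by (rule sum_shift_start[OF j1]) (auto simp: c_psi_zero)
      then show "2 ^ j * real (d choose j) * (\<Sum>n=1..p. g n * c_psi n j) =
          2 ^ j * real (d choose j) * (\<Sum>i=j..p. g i * c_psi i j)" by simp
    qed
    finally show ?thesis .
  qed
  have A1: "real (card (Aset d p)) = 2 * real (card (BP d p))"
    using sum_Aset_BP[where f = "\<lambda>_. 1::real" and d = d and p = p] by simp
  have A2: "real (card (Aset d p)) = (\<Sum>n=1..p. 1 * (\<Sum>j=1..d. 2 ^ j * real (d choose j) * c_psi n j))"
    unfolding card_Aset by (rule sum.cong) (auto simp: N_formula)
  have P1: "real (card (BP d p)) =
           1 / 2 * (\<Sum>j=1..d. 2 ^ j * real (d choose j) * (\<Sum>i=j..p. c_psi i j))"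
    using A1 A2 sw[of "\<lambda>_. 1"] by simp
  define c where "c i = (\<Sum>x\<in>BP d p. \<bar>x ! i\<bar>)" for i
  have c2: "(\<Sum>x\<in>Aset d p. real_of_int \<bar>x ! i\<bar>) = 2 * real_of_int (c i)" if "i < d" for i
  proof -
    have "(\<Sum>x\<in>Aset d p. real_of_int \<bar>x ! i\<bar>) = 2 * (\<Sum>x\<in>BP d p. real_of_int \<bar>x ! i\<bar>)"
      by (rule sum_Aset_BP) (simp add: that)
    also have "\<dots> = 2 * real_of_int (c i)" by (simp add: c_def)
    finally show ?thesis .
  qed
  have d0: "0 < d" using assms(1) by simp
  have ceq: "c i = c 0" if "i < d" for i
  proof -
    have "2 * real_of_int (c i) = (\<Sum>x\<in>Aset d p. real_of_int \<bar>x ! i\<bar>)"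
      using c2[OF that] by (rule sym)
    also have "\<dots> = (\<Sum>x\<in>Aset d p. real_of_int \<bar>x ! 0\<bar>)" by (rule coord_sym[OF that])
    also have "\<dots> = 2 * real_of_int (c 0)" by (rule c2[OF d0])
    finally show ?thesis by simp
  qed
  have img: "c ` {..<d} = {c 0}"
  proof (intro equalityI subsetI)
    fix y assume "y \<in> c ` {..<d}"
    then obtain i where i: "i \<in> {..<d}" "y = c i" by (rule imageE)
    then have "i < d" by (simp only: lessThan_iff)
    then have "c i = c 0" by (rule ceq)
    then show "y \<in> {c 0}" using i(2) by simp
  next
    fix y assume "y \<in> {c 0}"
    then have "y = c 0" by simp
    moreover have "0 \<in> {..<d}" using d0 by simp
    ultimately show "y \<in> c ` {..<d}" by blast
  qed
  have "kappa d (BP d p) = Max (c ` {..<d})" unfolding kappa_def c_def by simp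
  then have kap: "kappa d (BP d p) = c 0" unfolding img by simp
  have "(\<Sum>i<d. \<Sum>x\<in>Aset d p. real_of_int \<bar>x ! i\<bar>) = (\<Sum>i<d. \<Sum>x\<in>Aset d p. real_of_int \<bar>x ! 0\<bar>)"
    by (rule sum.cong[OF refl]) (rule coord_sym, simp)
  then have "real d * (\<Sum>x\<in>Aset d p. real_of_int \<bar>x ! 0\<bar>) = (\<Sum>i<d. \<Sum>x\<in>Aset d p. real_of_int \<bar>x ! i\<bar>)"
    by simp
  also have "\<dots> = (\<Sum>x\<in>Aset d p. \<Sum>i<d. real_of_int \<bar>x ! i\<bar>)" by (rule sum.swap)
  also have "\<dots> = (\<Sum>x\<in>Aset d p. real_of_int (norm1 x))"
    by (rule sum.cong) (auto simp: norm1_nth Aset_def)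
  also have "\<dots> = (\<Sum>n=1..p. real n * (\<Sum>j=1..d. 2 ^ j * real (d choose j) * c_psi n j))"
    unfolding norm_Aset by (rule sum.cong) (auto simp: N_formula)
  also have "\<dots> = (\<Sum>j=1..d. 2 ^ j * real (d choose j) * (\<Sum>i=j..p. real i * c_psi i j))"
    by (rule sw)
  finally have "real d * (2 * real_of_int (c 0)) = (\<Sum>j=1..d. 2 ^ j * real (d choose j) * (\<Sum>i=j..p. real i * c_psi i j))"
    using c2[OF d0] by simp
  then have P2: "real_of_int (kappa d (BP d p)) =
           1 / (2 * real d) * (\<Sum>j=1..d. 2 ^ j * real (d choose j) * (\<Sum>i=j..p. real i * c_psi i j))"
    using assms(1) unfolding kap by (simp add: field_simps)
  show ?thesis using P1 P2 by blast
qed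

end
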